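(* For any constant $c>2$ there is a choice of sample size $\ell=O(\log n)$ such that the following holds for any weighted stream of $n$ updates: with probability at least $1-1/n$ (over the algorithm's random sampling), for every integer $0\le j<k/c$ and every item $i\in[m]$, the estimate $\hat f_i$ returned by the Reduce-By-Sample-Median algorithm (defined in the context) with $k$ counters and sample size $\ell$ satisfies $$0\le f_i-\hat f_i\le \frac{N^{\mathrm{res}(j)}}{k/c-j}.$$
   Context: A weighted stream over the universe $[m]=\{1,\dots,m\}$ is a sequence of updates $(i_1,\Delta_1),\dots,(i_n,\Delta_n)$ with $i_t\in[m]$ and real weights $\Delta_t>0$. The frequency of $i$ is $f_i=\sum_{t: i_t=i}\Delta_t$. $N^{\mathrm{res}(j)}$ denotes the sum of the frequencies of all items except the $j$ items of largest frequency (ties broken arbitrarily). The Reduce-By-Sample-Median algorithm with parameters $k\ge 1$ (number of counters) and $\ell\ge 1$ (sample size) maintains a set $T\subseteq[m]$ of at most $k$ items, each $j\in T$ carrying a nonnegative real counter $c(j)$; initially $T=\emptyset$. Update$(i,\Delta)$: if $i\in T$, set $c(i)\gets c(i)+\Delta$; else if $|T|<k$, add $i$ to $T$ with $c(i)=\Delta$; else call DecrementCounters(), and afterwards, if $\Delta\ge c^*$, add $i$ to $T$ with $c(i)=\Delta-c^*$. DecrementCounters(): sample $\ell$ counters uniformly at random from $T$ (fresh randomness in each call) and let $c^*$ be the median of the sampled counter values; for every $j\in T$ set $c(j)\gets c(j)-c^*$, and remove $j$ from $T$ if now $c(j)\le 0$. Estimate$(i)$ returns $c(i)$ if $i\in T$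 and $0$ otherwise. *)

theory Defs
  imports "HOL-Probability.Probability" "HOL-Library.Landau_Symbols"
begin

(* A weighted stream: list of updates (item, weight). Items are naturals (universe [m] = {1..m}). *)
type_synonym stream = "(nat \<times> real) list"

(* Algorithm state: the set T of tracked items and the counter function c (only meaningful on T). *)
type_synonym rbsm_state = "nat set \<times> (nat \<Rightarrow> real)"

definition freq :: "stream \<Rightarrow> nat \<Rightarrow> real" where
  "freq xs i = sum_list (map snd (filter (\<lambda>u. fst u = i) xs))"

definition Nres :: "stream \<Rightarrow> nat \<Rightarrow> nat \<Rightarrow> real" where
  "Nres xs m j = sum_list (drop j (rev (sort (map (freq xs) [1..<m+1]))))"

fun sample_list :: "nat \<Rightarrow> nat set \<Rightarrow> nat list pmf" where
  "sample_list 0 T = return_pmf []"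
| "sample_list (Suc l) T =
     bind_pmf (pmf_of_set T) (\<lambda>x. bind_pmf (sample_list l T) (\<lambda>xs. return_pmf (x # xs)))"

(* median of a nonempty list: element at position (length - 1) div 2 of the sorted list
   (the usual median for odd length, the lower median for even length) *)
definition median :: "real list \<Rightarrow> real" where
  "median vs = sort vs ! ((length vs - 1) div 2)"

(* DecrementCounters followed by the conditional insertion of i, as one random step *)
definition decrement_and_insert :: "nat \<Rightarrow> rbsm_state \<Rightarrow> nat \<Rightarrow> real \<Rightarrow> rbsm_state pmf" where
  "decrement_and_insert l s i \<Delta> =
     (case s of (T, c) \<Rightarrow>
       bind_pmf (sample_list l T) (\<lambda>xs.
         let cs = median (map c xs);
             c' = (\<lambda>j. c j - cs);
             T' = {j \<in> T. c' j > 0}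
         in if \<Delta> \<ge> cs then return_pmf (insert i T', c'(i := \<Delta> - cs))
            else return_pmf (T', c')))"

definition rbsm_update :: "nat \<Rightarrow> nat \<Rightarrow> rbsm_state \<Rightarrow> nat \<times> real \<Rightarrow> rbsm_state pmf" where
  "rbsm_update k l s u =
     (case s of (T, c) \<Rightarrow> case u of (i, \<Delta>) \<Rightarrow>
        if i \<in> T then return_pmf (T, c(i := c i + \<Delta>))
        else if card T < k then return_pmf (insert i T, c(i := \<Delta>))
        else decrement_and_insert l (T, c) i \<Delta>)"

fun rbsm_run_from :: "nat \<Rightarrow> nat \<Rightarrow> rbsm_state \<Rightarrow> stream \<Rightarrow> rbsm_state pmf" where
  "rbsm_run_from k l s [] = return_pmf s"
| "rbsm_run_from k l s (u # us) = bind_pmf (rbsm_update k l s u) (\<lambda>s'. rbsm_run_from k l s' us)"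

definition rbsm_run :: "nat \<Rightarrow> nat \<Rightarrow> stream \<Rightarrow> rbsm_state pmf" where
  "rbsm_run k l xs = rbsm_run_from k l ({}, (\<lambda>_. 0)) xs"

definition estimate :: "rbsm_state \<Rightarrow> nat \<Rightarrow> real" where
  "estimate s i = (if i \<in> fst s then snd s i else 0)"

end

theory Submission
  imports Defs
begin


lemma measure_bind_pmf_int:
  "measure_pmf.prob (bind_pmf M f) X = measure_pmf.expectation M (\<lambda>x. measure_pmf.prob (f x) X)"
  unfolding measure_pmf_bind
  by (rule measure_pmf.measure_bind[where N="count_space UNIV"]) (auto simp: measurable_def space_subprob_algebra prob_space_imp_subprob_space measure_pmf.prob_space_axioms)

lemma bind_bound:
  assumes "\<And>x. x \<in> set_pmf M \<Longrightarrow> \<not> P x \<Longrightarrow> measure_pmf.prob (f x) X \<le> b" "b \<ge> 0"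
  shows "measure_pmf.prob (bind_pmf M f) X \<le> measure_pmf.prob M {x. P x} + b"
proof -
  have "measure_pmf.prob (bind_pmf M f) X = measure_pmf.expectation M (\<lambda>x. measure_pmf.prob (f x) X)"
    by (rule measure_bind_pmf_int)
  also have "\<dots> \<le> measure_pmf.expectation M (\<lambda>x. indicator {x. P x} x + b)"
  proof (rule integral_mono_AE)
    show "integrable (measure_pmf M) (\<lambda>x. measure_pmf.prob (f x) X)"
      by (rule measure_pmf.integrable_const_bound[where B=1]) auto
    show "integrable (measure_pmf M) (\<lambda>x. indicator {x. P x} x + b)"
      by (rule measure_pmf.integrable_const_bound[where B="1+b"]) (auto simp: indicator_def assms)
    show "AE x in measure_pmf M. measure_pmf.prob (f x) X \<le> indicator {x. P x} x + b"
      using assms by (auto simp: AE_measure_pmf_iff indicator_def intro: order.trans[OF measure_pmf.prob_le_1])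
  qed
  also have "\<dots> = measure_pmf.prob M {x. P x} + b"
    by (subst Bochner_Integration.integral_add)
       (auto intro!: measure_pmf.integrable_const_bound[where B=1] simp: indicator_def)
  finally show ?thesis .
qed

lemma sample_list_Suc:
  "sample_list (Suc l) T = bind_pmf (pmf_of_set T) (\<lambda>x. map_pmf (Cons x) (sample_list l T))"
  by (simp add: map_pmf_def)

lemma chernoff_sample:
  fixes lam :: real
  assumes T: "finite T" "T \<noteq> {}" and AT: "A \<subseteq> T" and lam: "lam \<ge> 1"
  shows "measure_pmf.prob (sample_list l T) {xs. real (length (filter (\<lambda>x. x \<in> A) xs)) \<ge> s}
     \<le> (1 + real (card A) / real (card T) * (lam - 1)) ^ l / lam powr s"
proof (induction l arbitrary: s)
  case 0
  show ?case
  proof (cases "s \<le> 0")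
    case True
    have "lam powr s \<le> 1" using powr_mono[of s 0 lam] lam True by simp
    moreover have "lam powr s > 0" using lam by simp
    ultimately show ?thesis using True by (simp add: field_simps indicator_def)
  next
    case False then show ?thesis using lam by simp
  qed
next
  case (Suc l)
  define a where "a = 1 + real (card A) / real (card T) * (lam - 1)"
  define g where "g = (\<lambda>x. measure_pmf.prob (map_pmf (Cons x) (sample_list l T))
         {xs. real (length (filter (\<lambda>x. x \<in> A) xs)) \<ge> s})"
  have ct: "real (card T) > 0" using T by (simp add: card_gt_0_iff)
  have cA: "card A \<le> card T" using AT T by (simp add: card_mono)
  have lp: "lam powr s > 0" using lam by simp
  have gA: "g x \<le> a ^ l / lam powr (s - 1)" if "x \<in> A" for x
  proof -
    have "g x = measure_pmf.prob (sample_list l T) {xs. real (length (filter (\<lambda>x. x \<in> A) xs)) \<ge> s - 1}"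
      unfolding g_def using that by (simp add: vimage_def algebra_simps)
    then show ?thesis using Suc.IH[of "s-1"] by (simp add: a_def)
  qed
  have gN: "g x \<le> a ^ l / lam powr s" if "x \<notin> A" for x
  proof -
    have "g x = measure_pmf.prob (sample_list l T) {xs. real (length (filter (\<lambda>x. x \<in> A) xs)) \<ge> s}"
      unfolding g_def using that by (simp add: vimage_def)
    then show ?thesis using Suc.IH[of "s"] by (simp add: a_def)
  qed
  have "measure_pmf.prob (sample_list (Suc l) T) {xs. real (length (filter (\<lambda>x. x \<in> A) xs)) \<ge> s}
      = sum g T / card T"
    unfolding sample_list_Suc measure_bind_pmf_int g_def
    by (rule integral_pmf_of_set[OF T(2,1)])
  also have "sum g T \<le> sum (\<lambda>x. if x \<in> A then a ^ l / lam powr (s - 1) else a ^ l / lam powr s) T"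
    by (rule sum_mono) (auto intro: gA gN)
  also have "\<dots> = card A * (a ^ l / lam powr (s - 1)) + (card T - card A) * (a ^ l / lam powr s)"
  proof -
    have "T \<inter> {x. x \<in> A} = A" "T \<inter> - {x. x \<in> A} = T - A" using AT by auto
    then show ?thesis using T AT by (simp add: sum.If_cases card_Diff_subset finite_subset)
  qed
  also have "\<dots> = (a ^ l / lam powr s) * (card A * lam + (card T - card A))"
    using lam by (simp add: powr_diff field_simps)
  finally have "measure_pmf.prob (sample_list (Suc l) T) {xs. real (length (filter (\<lambda>x. x \<in> A) xs)) \<ge> s}
     \<le> (a ^ l / lam powr s) * (card A * lam + (card T - card A)) / card T"
    using ct by (simp add: divide_right_mono)
  also have "\<dots> = a ^ Suc l / lam powr s"
    using ct cA by (simp add: a_def field_simps of_nat_diff)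
  finally show ?case by (simp add: a_def)
qed

lemma set_pmf_sample_list:
  assumes "finite T" "T \<noteq> {}"
  shows "xs \<in> set_pmf (sample_list l T) \<Longrightarrow> set xs \<subseteq> T \<and> length xs = l"
  using assms by (induction l arbitrary: xs) force+

lemma length_filter_mono:
  "(\<And>x. x \<in> set xs \<Longrightarrow> P x \<Longrightarrow> Q x) \<Longrightarrow> length (filter P xs) \<le> length (filter Q xs)"
  by (induction xs) auto

lemma median_count:
  assumes "vs \<noteq> []"
  shows "length (filter (\<lambda>v. v \<ge> median vs) vs) \<ge> length vs - (length vs - 1) div 2"
    and "median vs \<in> set vs"
proof -
  define h where "h = (length vs - 1) div 2"
  define ss where "ss = sort vs"
  have len: "length ss = length vs" by (simp add: ss_def)
  have hl: "h < length vs" using assms by (cases vs) (auto simp: h_def)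
  have med: "median vs = ss ! h" by (simp add: median_def ss_def h_def)
  have srt: "sorted ss" by (simp add: ss_def)
  have "\<forall>v\<in>set (drop h ss). v \<ge> ss ! h"
  proof
    fix v assume "v \<in> set (drop h ss)"
    then obtain p where p: "p < length (drop h ss)" "v = drop h ss ! p" by (auto simp: in_set_conv_nth)
    then have "v = ss ! (h + p)" using hl len by simp
    moreover have "h + p < length ss" using p by simp
    ultimately show "v \<ge> ss ! h" using srt by (simp add: sorted_nth_mono)
  qed
  then have "filter (\<lambda>v. v \<ge> median vs) (drop h ss) = drop h ss" by (simp add: med)
  then have "length (filter (\<lambda>v. v \<ge> median vs) ss) \<ge> length (drop h ss)"
    by (metis append_take_drop_id filter_append length_append le_add2)
  moreover have "length (filter (\<lambda>v. v \<ge> median vs) ss) = length (filter (\<lambda>v. v \<ge> median vs) vs)"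
    by (metis ss_def mset_sort mset_filter size_mset)
  ultimately show "length (filter (\<lambda>v. v \<ge> median vs) vs) \<ge> length vs - (length vs - 1) div 2"
    using len by (simp add: h_def)
  show "median vs \<in> set vs" using hl len med by (metis nth_mem set_sort ss_def)
qed

lemma card_top_lt:
  fixes c :: "nat \<Rightarrow> real"
  assumes "finite T" "kc > 0"
  defines "A \<equiv> {y\<in>T. real (card {j\<in>T. c j \<ge> c y}) < kc}"
  shows "real (card A) < kc"
proof (cases "A = {}")
  case True then show ?thesis using assms(2) by simp
next
  case False
  have fA: "finite A" using assms by (simp add: A_def)
  obtain y where y: "y \<in> A" "c y = Min (c ` A)"
  proof -
    have "Min (c ` A) \<in> c ` A" using fA False by (intro Min_in) auto
    then show ?thesis using that by auto
  qed
  have "A \<subseteq> {j\<in>T. c j \<ge> c y}" using y fA by (auto simp: A_def)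
  then have "card A \<le> card {j\<in>T. c j \<ge> c y}" using assms by (simp add: card_mono)
  moreover have "real (card {j\<in>T. c j \<ge> c y}) < kc" using y(1) by (simp add: A_def)
  ultimately show ?thesis by linarith
qed

lemma bad_sample_count:
  fixes c :: "nat \<Rightarrow> real"
  assumes "set xs \<subseteq> T" "xs \<noteq> []"
    and bad: "real (card {j\<in>T. c j \<ge> median (map c xs)}) < kc"
    and fT: "finite T"
  defines "A \<equiv> {y\<in>T. real (card {j\<in>T. c j \<ge> c y}) < kc}"
  shows "real (length (filter (\<lambda>x. x \<in> A) xs)) \<ge> real (length xs) / 2"
proof -
  let ?med = "median (map c xs)"
  have "length (filter (\<lambda>x. c x \<ge> ?med) xs) \<le> length (filter (\<lambda>x. x \<in> A) xs)"
  proof -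
    have "filter (\<lambda>x. c x \<ge> ?med) xs = filter (\<lambda>x. c x \<ge> ?med \<and> x \<in> T) xs"
      using assms(1) by (intro filter_cong) auto
    moreover have "length (filter (\<lambda>x. c x \<ge> ?med \<and> x \<in> T) xs) \<le> length (filter (\<lambda>x. x \<in> A) xs)"
    proof (rule length_filter_mono)
      fix x assume "x \<in> set xs" and x: "?med \<le> c x \<and> x \<in> T"
      have "{j\<in>T. c j \<ge> c x} \<subseteq> {j\<in>T. c j \<ge> ?med}" using x by auto
      then have "card {j\<in>T. c j \<ge> c x} \<le> card {j\<in>T. c j \<ge> ?med}" using fT by (simp add: card_mono)
      then show "x \<in> A" using x bad unfolding A_def by auto
    qed
    ultimately show ?thesis by simp
  qed
  moreover have "length (filter (\<lambda>x. c x \<ge> ?med) xs) \<ge> length xs - (length xs - 1) div 2"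
    using median_count(1)[of "map c xs"] assms(2) by (simp add: filter_map comp_def)
  ultimately have "length (filter (\<lambda>x. x \<in> A) xs) \<ge> length xs - (length xs - 1) div 2" by simp
  moreover have "real (length xs - (length xs - 1) div 2) \<ge> real (length xs) / 2" by linarith
  ultimately show ?thesis by linarith
qed

definition okst :: "nat \<Rightarrow> nat \<times> real \<Rightarrow> bool" where
  "okst m u \<longleftrightarrow> fst u \<in> {1..m} \<and> snd u > 0"

definition lost :: "stream \<Rightarrow> rbsm_state \<Rightarrow> nat \<Rightarrow> real" where
  "lost pre s i = freq pre i - estimate s i"

definition Inv :: "real \<Rightarrow> nat \<Rightarrow> stream \<Rightarrow> rbsm_state \<Rightarrow> bool" where
  "Inv kc m pre s \<longleftrightarrow> finite (fst s) \<and> fst s \<subseteq> {1..m} \<and>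
     (\<forall>i\<in>fst s. 0 \<le> snd s i \<and> snd s i \<le> freq pre i) \<and>
     (\<exists>D\<ge>0. (\<forall>i\<in>{1..m}. lost pre s i \<le> D) \<and>
        (\<forall>J\<subseteq>{1..m}. real (card J) < kc \<longrightarrow> D * (kc - real (card J)) \<le> (\<Sum>i\<in>{1..m}-J. lost pre s i)))"

lemma freq_snoc: "freq (pre @ [u]) j = freq pre j + (if fst u = j then snd u else 0)"
  by (simp add: freq_def)

lemma freq_nonneg: "\<forall>u\<in>set pre. okst m u \<Longrightarrow> freq pre j \<ge> 0"
  unfolding freq_def okst_def by (induction pre) (auto intro: add_nonneg_nonneg)

lemma Inv_init: "Inv kc m [] ({}, \<lambda>_. 0)"
  by (auto simp: Inv_def lost_def freq_def estimate_def)

lemma Inv_in_T: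
  assumes "Inv kc m pre (T, c)" "i \<in> T" "d > 0"
  shows "Inv kc m (pre @ [(i, d)]) (T, c(i := c i + d))"
proof -
  have l: "lost (pre @ [(i, d)]) (T, c(i := c i + d)) j = lost pre (T, c) j" for j
    using assms(2) by (auto simp: lost_def freq_snoc estimate_def)
  have "c i \<ge> 0" using assms(1,2) by (auto simp: Inv_def)
  then show ?thesis using assms unfolding Inv_def l by (auto simp: freq_snoc)
qed

lemma Inv_insert:
  assumes "Inv kc m pre (T, c)" "i \<notin> T" "i \<in> {1..m}" "d > 0" "\<forall>u\<in>set pre. okst m u"
  shows "Inv kc m (pre @ [(i, d)]) (insert i T, c(i := d))"
proof -
  have l: "lost (pre @ [(i, d)]) (insert i T, c(i := d)) j = lost pre (T, c) j" for j
    using assms(2) by (auto simp: lost_def freq_snoc estimate_def)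
  have "freq pre i \<ge> 0" using freq_nonneg assms(5) by blast
  then show ?thesis using assms unfolding Inv_def l by (auto simp: freq_snoc)
qed

lemma Inv_dec:
  assumes inv: "Inv kc m pre (T, c)" and iT: "i \<notin> T" "i \<in> {1..m}" "d > 0"
    and pre: "\<forall>u\<in>set pre. okst m u"
    and cs: "cs \<ge> 0" and q: "real (card {j\<in>T. c j \<ge> cs}) \<ge> kc"
  defines "c' \<equiv> (\<lambda>j. c j - cs)"
  defines "T' \<equiv> {j\<in>T. c' j > 0}"
  shows "Inv kc m (pre @ [(i,d)]) (if d \<ge> cs then (insert i T', c'(i := d - cs)) else (T', c'))"
proof -
  define s' where "s' = (if d \<ge> cs then (insert i T', c'(i := d - cs)) else (T', c'))"
  have fT: "finite T" and Tm: "T \<subseteq> {1..m}" and cb: "\<forall>j\<in>T. 0 \<le> c j \<and> c j \<le> freq pre j"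
    using inv by (auto simp: Inv_def)
  obtain D where D0: "D \<ge> 0" and Db: "\<forall>j\<in>{1..m}. lost pre (T, c) j \<le> D"
    and DJ: "\<forall>J\<subseteq>{1..m}. real (card J) < kc \<longrightarrow> D * (kc - real (card J)) \<le> (\<Sum>j\<in>{1..m}-J. lost pre (T, c) j)"
    using inv unfolding Inv_def by blast
  have fi: "freq pre i \<ge> 0" using freq_nonneg pre by blast
  define \<delta> where "\<delta> j = (if j \<in> T then min (c j) cs else if j = i then min d cs else 0)" for j
  have lj: "lost (pre @ [(i,d)]) s' j = lost pre (T, c) j + \<delta> j" for j
  proof (cases "j \<in> T")
    case True
    then have "j \<noteq> i" using iT by auto
    then show ?thesis using True
      by (auto simp: lost_def estimate_def freq_snoc s'_def T'_def c'_def \<delta>_def min_def)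
  next
    case False
    then show ?thesis
      by (auto simp: lost_def estimate_def freq_snoc s'_def T'_def c'_def \<delta>_def min_def)
  qed
  have d0: "0 \<le> \<delta> j" "\<delta> j \<le> cs" for j using cb cs iT by (auto simp: \<delta>_def)
  have struct: "finite (fst s') \<and> fst s' \<subseteq> {1..m} \<and>
     (\<forall>j\<in>fst s'. 0 \<le> snd s' j \<and> snd s' j \<le> freq (pre @ [(i,d)]) j)"
    using fT Tm cb iT fi cs by (auto simp: s'_def T'_def c'_def freq_snoc; smt (verit))
  have "\<forall>j\<in>{1..m}. lost (pre @ [(i,d)]) s' j \<le> D + cs"
    using Db d0 lj by (smt (verit))
  moreover have "D + cs \<ge> 0" using D0 cs by simp
  moreover have "\<forall>J\<subseteq>{1..m}. real (card J) < kc \<longrightarrow>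
      (D + cs) * (kc - real (card J)) \<le> (\<Sum>j\<in>{1..m}-J. lost (pre @ [(i,d)]) s' j)"
  proof (intro allI impI)
    fix J assume J: "J \<subseteq> {1..m}" "real (card J) < kc"
    define Q where "Q = {j\<in>T. c j \<ge> cs}"
    have fJ: "finite J" using J finite_subset by blast
    have fQ: "finite Q" using fT by (simp add: Q_def)
    have "card Q \<le> card (Q - J) + card J"
    proof -
      have "card Q \<le> card ((Q - J) \<union> J)" using fQ fJ by (intro card_mono) auto
      also have "\<dots> \<le> card (Q - J) + card J" by (rule card_Un_le)
      finally show ?thesis .
    qed
    then have cQJ: "kc - real (card J) \<le> real (card (Q - J))" using q unfolding Q_def[symmetric] by linarith
    have QJS: "Q - J \<subseteq> {1..m} - J" using Tm by (auto simp: Q_def)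
    have "(\<Sum>j\<in>Q-J. \<delta> j) = (\<Sum>j\<in>Q-J. cs)"
      by (rule sum.cong) (auto simp: \<delta>_def Q_def min_def)
    then have "cs * real (card (Q - J)) = (\<Sum>j\<in>Q-J. \<delta> j)" by simp
    also have "\<dots> \<le> (\<Sum>j\<in>{1..m}-J. \<delta> j)"
      by (rule sum_mono2) (use QJS d0 in auto)
    finally have s1: "cs * real (card (Q - J)) \<le> (\<Sum>j\<in>{1..m}-J. \<delta> j)" .
    have "(D + cs) * (kc - real (card J)) = D * (kc - real (card J)) + cs * (kc - real (card J))"
      by (simp add: algebra_simps)
    also have "\<dots> \<le> (\<Sum>j\<in>{1..m}-J. lost pre (T, c) j) + cs * real (card (Q - J))"
      using DJ J cQJ cs by (intro add_mono mult_left_mono) auto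
    also have "\<dots> \<le> (\<Sum>j\<in>{1..m}-J. lost pre (T, c) j) + (\<Sum>j\<in>{1..m}-J. \<delta> j)"
      using s1 by simp
    also have "\<dots> = (\<Sum>j\<in>{1..m}-J. lost (pre @ [(i,d)]) s' j)"
      by (simp add: lj sum.distrib)
    finally show "(D + cs) * (kc - real (card J)) \<le> (\<Sum>j\<in>{1..m}-J. lost (pre @ [(i,d)]) s' j)" .
  qed
  ultimately have "Inv kc m (pre @ [(i,d)]) s'" using struct unfolding Inv_def by blast
  then show ?thesis by (simp add: s'_def)
qed

definition rho :: "real \<Rightarrow> real" where
  "rho cc = 2 * (cc - 1) / cc / sqrt (cc - 1)"

lemma rho_pos: "cc > 2 \<Longrightarrow> rho cc > 0"
  by (simp add: rho_def)

lemma rho_lt1: assumes "cc > 2" shows "rho cc < 1"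
proof -
  have s: "sqrt (cc - 1) > 0" using assms by simp
  have "2 * sqrt (cc - 1) < cc"
  proof -
    have "(2 * sqrt (cc - 1))^2 = 4 * (cc - 1)" using assms by (simp add: power_mult_distrib)
    also have "\<dots> < cc^2"
    proof -
      have h: "(cc - 2) * (cc - 2) > 0" using assms by simp
      have "cc^2 - 4 * (cc - 1) = (cc - 2) * (cc - 2)" by (simp add: power2_eq_square algebra_simps)
      then show ?thesis using h by linarith
    qed
    finally have "(2 * sqrt (cc - 1))^2 < cc^2" .
    then show ?thesis using assms by (metis power2_less_imp_less less_trans zero_less_numeral less_imp_le)
  qed
  moreover have "2 * (cc - 1) / cc / sqrt (cc - 1) = 2 * sqrt (cc - 1) / cc"
  proof -
    have "sqrt (cc - 1) * sqrt (cc - 1) = cc - 1" using assms by simp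
    then show ?thesis using s assms by (simp add: field_simps)
  qed
  ultimately show ?thesis using assms by (simp add: rho_def)
qed

lemma chernoff_arith:
  fixes cc :: real
  assumes cc: "cc > 2" and A: "real (card A) < real k / cc" and kT: "k \<le> card T" and T: "card T > 0"
  shows "(1 + real (card A) / real (card T) * (cc - 1 - 1)) ^ l / (cc - 1) powr (real l / 2) \<le> rho cc ^ l"
proof -
  define a where "a = 1 + real (card A) / real (card T) * (cc - 2)"
  have "real (card A) / real (card T) \<le> 1 / cc"
  proof -
    have "real k / cc \<le> real (card T) / cc" using kT cc by (intro divide_right_mono) auto
    then have "real (card A) < real (card T) / cc" using A by linarith
    then show ?thesis using T cc by (simp add: field_simps)
  qed
  then have "real (card A) / real (card T) * (cc - 2) \<le> 1 / cc * (cc - 2)"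
    using cc by (intro mult_right_mono) auto
  moreover have "1 + 1 / cc * (cc - 2) = 2 * (cc - 1) / cc" using cc by (simp add: field_simps)
  ultimately have a1: "a \<le> 2 * (cc - 1) / cc" unfolding a_def by linarith
  have a0: "a \<ge> 0" using cc by (simp add: a_def)
  have sq: "(cc - 1) powr (real l / 2) = sqrt (cc - 1) ^ l"
  proof -
    have "(cc - 1) powr (real l / 2) = ((cc - 1) powr (1/2)) powr real l"
      using cc by (simp add: powr_powr)
    also have "\<dots> = sqrt (cc - 1) ^ l" using cc by (simp add: powr_half_sqrt powr_realpow)
    finally show ?thesis .
  qed
  have "a ^ l / sqrt (cc - 1) ^ l = (a / sqrt (cc - 1)) ^ l" by (simp add: power_divide)
  also have "\<dots> \<le> rho cc ^ l"
    unfolding rho_def using a0 a1 cc by (intro power_mono divide_right_mono) auto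
  finally show ?thesis using sq by (simp add: a_def)
qed


lemma step_prob:
  assumes inv: "Inv (real k / cc) m pre s" and u: "okst m u" and pre: "\<forall>v\<in>set pre. okst m v"
    and cc: "cc > 2" and k: "k \<ge> 1" and l: "l \<ge> 1"
  shows "measure_pmf.prob (rbsm_update k l s u) {s'. \<not> Inv (real k / cc) m (pre @ [u]) s'} \<le> rho cc ^ l"
proof -
  obtain T c where s: "s = (T, c)" by (cases s)
  obtain i d where ud: "u = (i, d)" by (cases u)
  have im: "i \<in> {1..m}" and d: "d > 0" using u by (auto simp: okst_def ud)
  have rp: "rho cc ^ l \<ge> 0" using rho_pos[OF cc] by simp
  let ?kc = "real k / cc"
  show ?thesis
  proof (cases "i \<in> T")
    case True
    have "Inv ?kc m (pre @ [u]) (T, c(i := c i + d))"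
      using Inv_in_T[OF inv[unfolded s] True d] by (simp add: ud)
    then show ?thesis using rp True by (simp add: rbsm_update_def s ud)
  next
    case nT: False
    show ?thesis
    proof (cases "card T < k")
      case True
      have "Inv ?kc m (pre @ [u]) (insert i T, c(i := d))"
        using Inv_insert[OF inv[unfolded s] nT im d pre] by (simp add: ud)
      then show ?thesis using rp nT True by (simp add: rbsm_update_def s ud)
    next
      case False
      have fT: "finite T" and c0: "\<forall>j\<in>T. 0 \<le> c j" using inv by (auto simp: Inv_def s)
      have kT: "k \<le> card T" using False by simp
      have Tne: "T \<noteq> {}" using kT k fT by auto
      define A where "A = {y\<in>T. real (card {j\<in>T. c j \<ge> c y}) < ?kc}"
      have kc0: "?kc > 0" using k cc by simp
      have cA: "real (card A) < ?kc" unfolding A_def by (rule card_top_lt[OF fT kc0])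
      have AT: "A \<subseteq> T" by (auto simp: A_def)
      define bad where "bad xs \<longleftrightarrow> real (card {j\<in>T. c j \<ge> median (map c xs)}) < ?kc" for xs
      have upd: "rbsm_update k l s u = decrement_and_insert l (T, c) i d"
        using nT False by (simp add: rbsm_update_def s ud)
      have "measure_pmf.prob (rbsm_update k l s u) {s'. \<not> Inv ?kc m (pre @ [u]) s'}
          \<le> measure_pmf.prob (sample_list l T) {xs. bad xs} + 0"
        unfolding upd decrement_and_insert_def prod.case
      proof (rule bind_bound)
        fix xs assume xs: "xs \<in> set_pmf (sample_list l T)" "\<not> bad xs"
        have xsT: "set xs \<subseteq> T" "length xs = l" using set_pmf_sample_list[OF fT Tne xs(1)] by auto
        let ?cs = "median (map c xs)"
        have "map c xs \<noteq> []" using xsT l by auto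
        then have "?cs \<in> set (map c xs)" by (rule median_count(2))
        then have cs0: "?cs \<ge> 0" using xsT c0 by auto
        have q: "real (card {j\<in>T. c j \<ge> ?cs}) \<ge> ?kc" using xs(2) by (simp add: bad_def)
        have "Inv ?kc m (pre @ [(i,d)]) (if d \<ge> ?cs then (insert i {j\<in>T. c j - ?cs > 0}, (\<lambda>j. c j - ?cs)(i := d - ?cs)) else ({j\<in>T. c j - ?cs > 0}, \<lambda>j. c j - ?cs))"
          by (rule Inv_dec[OF inv[unfolded s] nT im d pre cs0 q])
        then show "measure_pmf.prob
             (let cs = ?cs; c' = \<lambda>j. c j - cs; T' = {j \<in> T. 0 < c' j}
              in if cs \<le> d then return_pmf (insert i T', c'(i := d - cs)) else return_pmf (T', c'))
             {s'. \<not> Inv ?kc m (pre @ [u]) s'} \<le> 0"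
          by (auto simp: Let_def ud split: if_splits)
      qed simp
      also have "measure_pmf.prob (sample_list l T) {xs. bad xs}
          \<le> measure_pmf.prob (sample_list l T) {xs. real (length (filter (\<lambda>x. x \<in> A) xs)) \<ge> real l / 2}"
      proof (rule measure_pmf.finite_measure_mono_AE)
        show "AE xs in measure_pmf (sample_list l T). xs \<in> {xs. bad xs} \<longrightarrow>
              xs \<in> {xs. real (length (filter (\<lambda>x. x \<in> A) xs)) \<ge> real l / 2}"
        proof (rule AE_pmfI, safe)
          fix xs assume xs: "xs \<in> set_pmf (sample_list l T)" "bad xs"
          have xsT: "set xs \<subseteq> T" "length xs = l" using set_pmf_sample_list[OF fT Tne xs(1)] by auto
          then have "xs \<noteq> []" using l by auto
          then show "real (length (filter (\<lambda>x. x \<in> A) xs)) \<ge> real l / 2"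
            using bad_sample_count[OF xsT(1) _ _ fT, where c=c and kc="real k / cc"] xs(2) xsT(2) unfolding bad_def A_def by auto
        qed
      qed simp
      also have "\<dots> \<le> (1 + real (card A) / real (card T) * (cc - 1 - 1)) ^ l / (cc - 1) powr (real l / 2)"
        by (rule chernoff_sample[OF fT Tne AT]) (use cc in simp)
      also have "\<dots> \<le> rho cc ^ l"
        by (rule chernoff_arith[OF cc cA kT]) (use fT Tne in \<open>simp add: card_gt_0_iff\<close>)
      finally show ?thesis by simp
    qed
  qed
qed

lemma run_prob:
  assumes cc: "cc > 2" and k: "k \<ge> 1" and l: "l \<ge> 1"
  shows "Inv (real k / cc) m pre s \<Longrightarrow> \<forall>u\<in>set (pre @ us). okst m u \<Longrightarrow>
    measure_pmf.prob (rbsm_run_from k l s us) {s'. \<not> Inv (real k / cc) m (pre @ us) s'}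
      \<le> real (length us) * rho cc ^ l"
proof (induction us arbitrary: pre s)
  case Nil
  then show ?case by simp
next
  case (Cons u us)
  have "measure_pmf.prob (rbsm_run_from k l s (u # us)) {s'. \<not> Inv (real k / cc) m (pre @ u # us) s'}
      \<le> measure_pmf.prob (rbsm_update k l s u) {s'. \<not> Inv (real k / cc) m (pre @ [u]) s'}
         + real (length us) * rho cc ^ l"
    unfolding rbsm_run_from.simps
  proof (rule bind_bound)
    fix s' assume "\<not> \<not> Inv (real k / cc) m (pre @ [u]) s'"
    then have "Inv (real k / cc) m (pre @ [u]) s'" by simp
    from Cons.IH[OF this] Cons.prems(2)
    show "measure_pmf.prob (rbsm_run_from k l s' us) {s'. \<not> Inv (real k / cc) m (pre @ u # us) s'}
       \<le> real (length us) * rho cc ^ l" by simp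
  next
    show "0 \<le> real (length us) * rho cc ^ l" using rho_pos[OF cc] by simp
  qed
  also have "\<dots> \<le> rho cc ^ l + real (length us) * rho cc ^ l"
    using step_prob[OF Cons.prems(1) _ _ cc k l, of u] Cons.prems(2) by simp
  finally show ?case by (simp add: algebra_simps)
qed

lemma Nres_set:
  "\<exists>J\<subseteq>{1..m}. card J \<le> j \<and> Nres xs m j = (\<Sum>i\<in>{1..m}-J. freq xs i)"
proof -
  define f where "f = freq xs"
  define ns where "ns = [1..<m+1]"
  define ks where "ks = rev (sort_key f ns)"
  have "sort (map f ns) = map f (sort_key f ns)"
    by (rule properties_for_sort) (simp_all add: mset_map)
  then have N: "Nres xs m j = sum_list (map f (drop j ks))"
    by (simp add: Nres_def f_def ns_def ks_def rev_map drop_map)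
  have dk: "distinct ks" and sk: "set ks = {1..m}" by (auto simp: ks_def ns_def)
  define J where "J = set (take j ks)"
  have "J \<subseteq> {1..m}" using sk by (auto simp: J_def dest: in_set_takeD)
  moreover have "card J \<le> j" unfolding J_def by (metis card_length length_take min.bounded_iff order_refl)
  moreover have "set (drop j ks) = {1..m} - J"
  proof -
    have "set ks = J \<union> set (drop j ks)" unfolding J_def by (metis append_take_drop_id set_append)
    moreover have "J \<inter> set (drop j ks) = {}" unfolding J_def using dk by (simp add: set_take_disj_set_drop_if_distinct)
    ultimately show ?thesis using sk by blast
  qed
  moreover have "sum_list (map f (drop j ks)) = sum f (set (drop j ks))"
    using dk by (simp add: sum_list_distinct_conv_sum_set)
  ultimately show ?thesis using N f_def by metis
qed

lemma final_good:
  assumes inv: "Inv kc m xs s" and ok: "\<forall>u\<in>set xs. okst m u" and j: "real j < kc" and i: "i \<in> {1..m}"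
  shows "0 \<le> freq xs i - estimate s i \<and> freq xs i - estimate s i \<le> Nres xs m j / (kc - real j)"
proof -
  obtain D where D0: "D \<ge> 0" and Db: "\<forall>i\<in>{1..m}. lost xs s i \<le> D"
    and DJ: "\<forall>J\<subseteq>{1..m}. real (card J) < kc \<longrightarrow> D * (kc - real (card J)) \<le> (\<Sum>i\<in>{1..m}-J. lost xs s i)"
    using inv unfolding Inv_def by blast
  have cb: "\<forall>i\<in>fst s. 0 \<le> snd s i \<and> snd s i \<le> freq xs i" using inv by (simp add: Inv_def)
  have est0: "estimate s i' \<ge> 0" for i' using cb by (auto simp: estimate_def)
  have l0: "lost xs s i' \<ge> 0" for i' using cb freq_nonneg[OF ok, of i'] by (auto simp: estimate_def lost_def)
  obtain J where J: "J \<subseteq> {1..m}" "card J \<le> j" "Nres xs m j = (\<Sum>i\<in>{1..m}-J. freq xs i)"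
    using Nres_set by blast
  have cJ: "real (card J) < kc" using J(2) j by linarith
  have "D * (kc - real j) \<le> D * (kc - real (card J))" using D0 J(2) by (intro mult_left_mono) auto
  also have "\<dots> \<le> (\<Sum>i\<in>{1..m}-J. lost xs s i)" using DJ J(1) cJ by blast
  also have "\<dots> \<le> (\<Sum>i\<in>{1..m}-J. freq xs i)" using est0 by (intro sum_mono) (simp add: lost_def)
  finally have "D \<le> Nres xs m j / (kc - real j)" using j J(3) by (simp add: pos_le_divide_eq)
  moreover have "lost xs s i \<le> D" using Db i by blast
  ultimately show ?thesis using l0[of i] by (simp add: lost_def)
qed


lemma rho_pow_bound:
  assumes cc: "cc > 2" and n: "n \<ge> 1"
    and l: "real l \<ge> 2 / (- ln (rho cc)) * ln (real n)"
  shows "real n * rho cc ^ l \<le> 1 / real n"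
proof -
  have r0: "rho cc > 0" and r1: "rho cc < 1" using rho_pos[OF cc] rho_lt1[OF cc] by auto
  have lr: "ln (rho cc) < 0" using r0 r1 by simp
  have lnn: "ln (real n) \<ge> 0" using n by simp
  have "real l * ln (rho cc) \<le> (2 / (- ln (rho cc)) * ln (real n)) * ln (rho cc)"
    using l lr by (intro mult_right_mono_neg) auto
  also have "\<dots> = - 2 * ln (real n)" using lr by (simp add: field_simps)
  finally have "ln (rho cc ^ l) \<le> ln (1 / real n ^ 2)"
    using r0 n by (simp add: ln_realpow ln_div)
  then have "rho cc ^ l \<le> 1 / real n ^ 2" using r0 n by (subst (asm) ln_le_cancel_iff) auto
  then have "real n * rho cc ^ l \<le> real n * (1 / real n ^ 2)" using n by (intro mult_left_mono) auto
  also have "\<dots> = 1 / real n" using n by (simp add: power2_eq_square)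
  finally show ?thesis .
qed

theorem theorem8:
  fixes c :: real
  assumes "c > 2"
  shows "\<exists>L :: nat \<Rightarrow> nat.
           (\<lambda>n. real (L n)) \<in> O(\<lambda>n. ln (real n)) \<and> (\<forall>n. L n \<ge> 1) \<and>
           (\<forall>(k::nat) (m::nat) (xs::stream). k \<ge> 1 \<longrightarrow>
              (\<forall>u \<in> set xs. fst u \<in> {1..m} \<and> snd u > 0) \<longrightarrow>
              measure_pmf.prob (rbsm_run k (L (length xs)) xs)
                {s. \<forall>j::nat. real j < real k / c \<longrightarrow>
                      (\<forall>i \<in> {1..m}.
                         0 \<le> freq xs i - estimate s i \<and>
                         freq xs i - estimate s i \<le> Nres xs m j / (real k / c - real j))}
              \<ge> 1 - 1 / real (length xs))"
proof -
  define K where "K = 2 / (- ln (rho c))"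
  define L where "L n = nat \<lceil>K * ln (real n)\<rceil> + 1" for n :: nat
  have r0: "rho c > 0" and r1: "rho c < 1" using rho_pos[OF assms] rho_lt1[OF assms] by auto
  have K0: "K > 0" using r0 r1 by (simp add: K_def)
  have LK: "real (L n) \<ge> K * ln (real n)" for n
    unfolding L_def by linarith
  have L1: "\<forall>n. L n \<ge> 1" by (simp add: L_def)
  have bigo: "(\<lambda>n. real (L n)) \<in> O(\<lambda>n. ln (real n))"
  proof (rule bigoI[where c="K + 2"])
    show "\<forall>\<^sub>F n in at_top. norm (real (L n)) \<le> (K + 2) * norm (ln (real n))"
      using eventually_ge_at_top[of "3::nat"]
    proof eventually_elim
      case (elim n)
      have "exp 1 \<le> (3::real)" by (rule exp_le)
      also have "\<dots> \<le> real n" using elim by simp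
      finally have "ln (exp 1) \<le> ln (real n)" using elim by (subst ln_le_cancel_iff) auto
      then have ln1: "ln (real n) \<ge> 1" by simp
      have "real (L n) \<le> K * ln (real n) + 2"
      proof -
        have "K * ln (real n) \<ge> 0" using K0 ln1 by simp
        then have "real (nat \<lceil>K * ln (real n)\<rceil>) \<le> K * ln (real n) + 1" by linarith
        then show ?thesis by (simp add: L_def)
      qed
      also have "\<dots> \<le> (K + 2) * ln (real n)" using ln1 by (simp add: algebra_simps)
      finally show ?case using ln1 by simp
    qed
  qed
  have main: "measure_pmf.prob (rbsm_run k (L (length xs)) xs)
                {s. \<forall>j::nat. real j < real k / c \<longrightarrow>
                      (\<forall>i \<in> {1..m}.
                         0 \<le> freq xs i - estimate s i \<and>
                         freq xs i - estimate s i \<le> Nres xs m j / (real k / c - real j))}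
              \<ge> 1 - 1 / real (length xs)"
    if k: "k \<ge> 1" and ok0: "\<forall>u \<in> set xs. fst u \<in> {1..m} \<and> snd u > 0" for k m xs
  proof -
    let ?n = "length xs"
    let ?l = "L ?n"
    let ?M = "rbsm_run k ?l xs"
    let ?kc = "real k / c"
    have ok: "\<forall>u\<in>set ([] @ xs). okst m u" using ok0 by (simp add: okst_def)
    have bad: "measure_pmf.prob ?M {s'. \<not> Inv ?kc m xs s'} \<le> real ?n * rho c ^ ?l"
      using run_prob[OF assms k, of ?l m "[]" "({}, \<lambda>_. 0)" xs] Inv_init ok L1
      by (simp add: rbsm_run_def)
    have nb: "real ?n * rho c ^ ?l \<le> 1 / real ?n"
    proof (cases "?n = 0")
      case True then show ?thesis by simp
    next
      case False
      have n1: "?n \<ge> 1" using False by (simp add: Suc_le_eq)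
      have "real ?l \<ge> 2 / (- ln (rho c)) * ln (real ?n)" using LK[of ?n] by (simp only: K_def)
      then show ?thesis by (rule rho_pow_bound[OF assms n1])
    qed
    have "{s. Inv ?kc m xs s} \<subseteq> {s. \<forall>j::nat. real j < real k / c \<longrightarrow>
                      (\<forall>i \<in> {1..m}.
                         0 \<le> freq xs i - estimate s i \<and>
                         freq xs i - estimate s i \<le> Nres xs m j / (real k / c - real j))}"
      using final_good ok by auto
    then have "measure_pmf.prob ?M {s. Inv ?kc m xs s} \<le> measure_pmf.prob ?M {s. \<forall>j::nat. real j < real k / c \<longrightarrow>
                      (\<forall>i \<in> {1..m}.
                         0 \<le> freq xs i - estimate s i \<and>
                         freq xs i - estimate s i \<le> Nres xs m j / (real k / c - real j))}"
      by (intro measure_pmf.finite_measure_mono) auto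
    moreover have "measure_pmf.prob ?M {s. Inv ?kc m xs s} = 1 - measure_pmf.prob ?M {s'. \<not> Inv ?kc m xs s'}"
    proof -
      have "{s. Inv ?kc m xs s} = space (measure_pmf ?M) - {s'. \<not> Inv ?kc m xs s'}" by auto
      moreover have "measure_pmf.prob ?M (space (measure_pmf ?M) - {s'. \<not> Inv ?kc m xs s'})
          = 1 - measure_pmf.prob ?M {s'. \<not> Inv ?kc m xs s'}"
        by (rule measure_pmf.prob_compl) simp
      ultimately show ?thesis by simp
    qed
    ultimately show ?thesis using bad nb by linarith
  qed
  show ?thesis using bigo L1 main by blast
qed
end
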